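(* For $n\geq 2$, the Shilov boundary of $\mathbb L_n$ is $\partial_s\mathbb L_n=\Lambda_n(\partial_s L_n)$, where $\partial_s L_n$ is the Shilov boundary of the Lie ball $L_n$.
   Context: $L_n:=\{z\in\mathbb C^n:\|z\|<1,\ \sqrt{\|z\|^4-|\sum_jz_j^2|^2}<1-\|z\|^2\}$ with $\|z\|^2=\sum_j|z_j|^2$; $\Lambda_n(z)=(z_1^2,z_2,\dots,z_n)$ and $\mathbb L_n:=\Lambda_n(L_n)$. The Shilov boundary $\partial_s D$ of a bounded domain $D$ is the Shilov boundary of the algebra of functions continuous on $\overline D$ and holomorphic in $D$. *)

theory Defs
  imports "HOL-Analysis.Analysis"
begin

text \<open>Points of C^n, n = 1 + CARD('m) (so n >= 2), are written z = (z_1, w)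
  with z_1 :: complex and w = (z_2,...,z_n) :: complex^'m.
  The norm on the product type is the Euclidean norm
  sqrt(|z_1|^2 + sum_j |z_j|^2).\<close>

type_synonym 'm cvec = "complex \<times> (complex ^ 'm)"

definition cscale :: "complex \<Rightarrow> 'm::finite cvec \<Rightarrow> 'm cvec" where
  "cscale c z = (c * fst z, \<chi> j. c * (snd z $ j))"

definition holo_on :: "('m::finite cvec \<Rightarrow> complex) \<Rightarrow> 'm cvec set \<Rightarrow> bool" where
  "holo_on f U \<longleftrightarrow> (\<forall>z\<in>U. \<exists>f'. (f has_derivative f') (at z) \<and>
                          (\<forall>c v. f' (cscale c v) = c * f' v))"

definition alg_A :: "'m::finite cvec set \<Rightarrow> ('m cvec \<Rightarrow> complex) set" where
  "alg_A D = {f. continuous_on (closure D) f \<and> holo_on f D}"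

definition is_closed_boundary :: "'m::finite cvec set \<Rightarrow> 'm cvec set \<Rightarrow> bool" where
  "is_closed_boundary D S \<longleftrightarrow> closed S \<and> S \<subseteq> closure D \<and>
     (\<forall>f\<in>alg_A D. \<forall>z\<in>closure D. \<exists>s\<in>S. norm (f z) \<le> norm (f s))"

definition shilov_boundary :: "'m::finite cvec set \<Rightarrow> 'm cvec set" where
  "shilov_boundary D = \<Inter> {S. is_closed_boundary D S}"

definition sqsum :: "'m::finite cvec \<Rightarrow> complex" where
  "sqsum z = (fst z)^2 + (\<Sum>j\<in>UNIV. (snd z $ j)^2)"

definition lie_ball :: "'m::finite cvec set" where
  "lie_ball = {z. norm z < 1 \<and>
      sqrt (norm z ^ 4 - (cmod (sqsum z))^2) < 1 - (norm z)^2}"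

definition Lam :: "'m::finite cvec \<Rightarrow> 'm cvec" where
  "Lam z = ((fst z)^2, snd z)"

definition LL :: "'m::finite cvec set" where
  "LL = Lam ` lie_ball"

end

theory Submission
  imports Defs "HOL-Complex_Analysis.Complex_Analysis" begin

definition cco :: "'m::finite cvec \<Rightarrow> 'm option \<Rightarrow> complex" where
  "cco z k = (case k of None \<Rightarrow> fst z | Some j \<Rightarrow> snd z $ j)"

definition mkv :: "('m option \<Rightarrow> complex) \<Rightarrow> 'm::finite cvec" where
  "mkv g = (g None, \<chi> j. g (Some j))"

lemma sum_opt: "(\<Sum>k\<in>(UNIV::'m::finite option set). g k) = g None + (\<Sum>j\<in>UNIV. g (Some j))"
  by (simp add: UNIV_option_conv sum.reindex)

lemma cco_mk[simp]: "cco (mkv g) k = g k"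
  by (cases k) (auto simp: cco_def mkv_def)

lemma cco_eq_iff: "(z = w) \<longleftrightarrow> (\<forall>k. cco z k = cco w k)"
proof
  assume "\<forall>k. cco z k = cco w k"
  then have "fst z = fst w" "\<And>j. snd z $ j = snd w $ j"
    by (metis cco_def option.simps(4), metis cco_def option.simps(5))
  then show "z = w" by (simp add: prod_eq_iff vec_eq_iff)
qed simp

lemma cco_add[simp]: "cco (z + w) k = cco z k + cco w k"
  by (cases k) (auto simp: cco_def)
lemma cco_diff[simp]: "cco (z - w) k = cco z k - cco w k"
  by (cases k) (auto simp: cco_def)
lemma cco_zero[simp]: "cco 0 k = 0"
  by (cases k) (auto simp: cco_def)
lemma cco_cscale[simp]: "cco (cscale c z) k = c * cco z k"
  by (cases k) (auto simp: cco_def cscale_def)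
lemma cco_scaleR[simp]: "cco (scaleR r z) k = r *\<^sub>R cco z k"
  by (cases k) (auto simp: cco_def)

lemma norm_sq: "(norm z)^2 = (\<Sum>k\<in>UNIV. (cmod (cco z k))^2)"
proof -
  have "(norm z)^2 = (cmod (fst z))^2 + (norm (snd z))^2"
    by (metis norm_Pair prod.collapse real_sqrt_pow2 add_nonneg_nonneg zero_le_power2)
  also have "(norm (snd z))^2 = (\<Sum>j\<in>UNIV. (cmod (snd z $ j))^2)"
    by (simp add: norm_vec_def L2_set_def sum_nonneg)
  finally show ?thesis by (simp add: sum_opt cco_def)
qed

lemma sqsum_cco: "sqsum z = (\<Sum>k\<in>UNIV. (cco z k)^2)"
  by (simp add: sqsum_def sum_opt cco_def)

lemma cco_le_norm: "cmod (cco z k) \<le> norm z"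
proof -
  have "(cmod (cco z k))^2 \<le> (\<Sum>k\<in>UNIV. (cmod (cco z k))^2)"
    by (rule member_le_sum) auto
  then have "(cmod (cco z k))^2 \<le> (norm z)^2" by (simp add: norm_sq)
  then show ?thesis using abs_le_square_iff by force
qed

lemma norm_cscale: "norm (cscale c z) = cmod c * norm z"
proof -
  have "(norm (cscale c z))^2 = (cmod c * norm z)^2"
    by (simp add: norm_sq power_mult_distrib norm_mult sum_distrib_left)
  then show ?thesis using power2_eq_iff_nonneg by force
qed

lemma sqsum_cscale: "sqsum (cscale c z) = c^2 * sqsum z"
  by (simp add: sqsum_cco power_mult_distrib sum_distrib_left)

lemma bl_cco: "bounded_linear (\<lambda>z. cco z k)"
proof (cases k)
  case None then show ?thesis by (simp add: cco_def bounded_linear_fst)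
next
  case (Some j) then show ?thesis
    using bounded_linear_compose[OF bounded_linear_vec_nth[of j] bounded_linear_snd]
    by (simp add: cco_def o_def)
qed

lemma bl_cscale: "bounded_linear (\<lambda>c. cscale c (V::'m::finite cvec))"
proof (rule bounded_linear_intro[where K="norm V"])
  show "cscale (x + y) V = cscale x V + cscale y V" for x y
    by (simp add: cco_eq_iff distrib_right)
  show "cscale (r *\<^sub>R x) V = r *\<^sub>R cscale x V" for r x
    by (simp add: cco_eq_iff scaleR_conv_of_real)
  show "norm (cscale x V) \<le> norm x * norm V" for x
    by (simp add: norm_cscale)
qed

lemma hol_line:
  assumes hf: "holo_on f U" and T: "open T" and img: "\<And>\<zeta>. \<zeta> \<in> T \<Longrightarrow> A + cscale \<zeta> V \<in> U"
  shows "(\<lambda>\<zeta>. f (A + cscale \<zeta> V)) holomorphic_on T"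
  unfolding holomorphic_on_def
proof
  fix \<zeta> assume z: "\<zeta> \<in> T"
  obtain f' where d: "(f has_derivative f') (at (A + cscale \<zeta> V))"
    and linf: "\<forall>c v. f' (cscale c v) = c * f' v"
    using hf img[OF z] unfolding holo_on_def by blast
  have g: "((\<lambda>\<zeta>. A + cscale \<zeta> V) has_derivative (\<lambda>h. cscale h V)) (at \<zeta>)"
    using bounded_linear.has_derivative[OF bl_cscale[of V] has_derivative_ident]
    by (auto intro!: derivative_eq_intros)
  have "((\<lambda>\<zeta>. f (A + cscale \<zeta> V)) has_derivative (\<lambda>h. f' (cscale h V))) (at \<zeta>)"
    using diff_chain_at[OF g d] by (simp add: o_def)
  moreover have "(\<lambda>h. f' (cscale h V)) = (*) (f' V)"
    using linf by (intro ext) (metis mult.commute)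
  ultimately have "((\<lambda>\<zeta>. f (A + cscale \<zeta> V)) has_field_derivative (f' V)) (at \<zeta>)"
    by (simp add: has_field_derivative_def)
  then show "(\<lambda>\<zeta>. f (A + cscale \<zeta> V)) field_differentiable at \<zeta> within T"
    using field_differentiable_at_within field_differentiable_def by blast
qed

definition linf :: "('m::finite option \<Rightarrow> complex) \<Rightarrow> 'm cvec \<Rightarrow> complex" where
  "linf a z = (\<Sum>k\<in>UNIV. a k * cco z k)"

lemma bl_lin: "bounded_linear (linf a)"
  unfolding linf_def
  by (intro bounded_linear_sum bounded_linear_compose[OF bounded_linear_mult_right bl_cco])

lemma linf_cscale: "linf a (cscale c v) = c * linf a v"
  by (simp add: linf_def sum_distrib_left algebra_simps)

lemma hol_exp_lin: "holo_on (\<lambda>z. exp (linf a z)) U"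
  unfolding holo_on_def
proof
  fix z :: "'a cvec"
  have "((\<lambda>z. exp (linf a z)) has_derivative (\<lambda>h. exp (linf a z) * linf a h)) (at z)"
    using has_derivative_compose[OF bounded_linear.has_derivative[OF bl_lin has_derivative_ident]
       DERIV_exp[unfolded has_field_derivative_def]] by fast
  then show "\<exists>f'. ((\<lambda>z. exp (linf a z)) has_derivative f') (at z) \<and> (\<forall>c v. f' (cscale c v) = c * f' v)"
    by (intro exI[of _ "(\<lambda>h. exp (linf a z) * linf a h)"]) (simp add: linf_cscale)
qed

lemma cont_exp_lin: "continuous_on S (\<lambda>z. exp (linf a z))"
  by (intro continuous_intros linear_continuous_on bl_lin)

lemma hol_Lam:
  assumes hf: "holo_on f V" and img: "Lam ` U \<subseteq> V"
  shows "holo_on (\<lambda>z. f (Lam z)) U"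
  unfolding holo_on_def
proof
  fix z assume z: "z \<in> U"
  obtain f' where d: "(f has_derivative f') (at (Lam z))"
    and linf: "\<forall>c v. f' (cscale c v) = c * f' v"
    using hf img z unfolding holo_on_def by blast
  have g: "(Lam has_derivative (\<lambda>h. (2 * fst z * fst h, snd h))) (at z)"
    unfolding Lam_def
    by (auto intro!: derivative_eq_intros has_derivative_Pair bounded_linear.has_derivative[OF bounded_linear_fst]
       bounded_linear.has_derivative[OF bounded_linear_snd])
  have "((\<lambda>z. f (Lam z)) has_derivative (\<lambda>h. f' (2 * fst z * fst h, snd h))) (at z)"
    using diff_chain_at[OF g d] by (simp add: o_def)
  moreover have "f' (2 * fst z * fst (cscale c h), snd (cscale c h)) = c * f' (2 * fst z * fst h, snd h)" for c h
  proof -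
    have "(2 * fst z * fst (cscale c h), snd (cscale c h)) = cscale c (2 * fst z * fst h, snd h)"
      by (simp add: cscale_def)
    then show ?thesis using linf by simp
  qed
  ultimately show "\<exists>f'. ((\<lambda>z. f (Lam z)) has_derivative f') (at z) \<and> (\<forall>c v. f' (cscale c v) = c * f' v)"
    by blast
qed

definition S0 :: "'m::finite cvec set" where
  "S0 = {z. norm z = 1 \<and> cmod (sqsum z) = 1}"

lemma sqsum_le: "cmod (sqsum z) \<le> (norm z)^2"
proof -
  have "cmod (sqsum z) \<le> (\<Sum>k\<in>UNIV. cmod ((cco z k)^2))"
    unfolding sqsum_cco by (rule norm_sum)
  then show ?thesis by (simp add: norm_sq norm_power)
qed

lemma cont_cco: "continuous_on S (\<lambda>z. cco z k)"
  by (intro linear_continuous_on bl_cco)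

lemma cont_sqsum: "continuous_on S sqsum"
  unfolding sqsum_cco[abs_def]
  by (intro continuous_intros cont_cco)

lemma L_sub_ball: "lie_ball \<subseteq> cball 0 1"
  by (auto simp: lie_ball_def)

lemma closL_norm: "z \<in> closure lie_ball \<Longrightarrow> norm z \<le> 1"
  using closure_minimal[OF L_sub_ball closed_cball] by auto

lemma compact_closL: "compact (closure (lie_ball::'m::finite cvec set))"
  using L_sub_ball bounded_cball bounded_subset compact_closure by blast

lemma cscale_diff: "cscale a s - cscale b s = cscale (a - b) s"
  by (simp add: cco_eq_iff algebra_simps)

lemma cscale_in_L: assumes "s \<in> S0" "cmod t < 1" shows "cscale t s \<in> lie_ball"
proof -
  have n: "norm (cscale t s) = cmod t" using assms by (simp add: S0_def norm_cscale)
  have q: "cmod (sqsum (cscale t s)) = (cmod t)^2" using assms by (simp add: S0_def sqsum_cscale norm_mult norm_power)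
  have "(cmod t)^4 - ((cmod t)^2)^2 = 0" by (simp add: power_mult[symmetric])
  moreover have "(cmod t)^2 < 1" using assms(2) by (simp add: power_less_one_iff abs_square_less_1)
  ultimately show ?thesis using assms(2) unfolding lie_ball_def by (simp add: n q)
qed

lemma cscale_in_S0: assumes "s \<in> S0" "cmod t = 1" shows "cscale t s \<in> S0"
  using assms by (simp add: S0_def norm_cscale sqsum_cscale norm_mult norm_power)

lemma S0_sub_closL: "S0 \<subseteq> closure lie_ball"
proof
  fix s :: "'a cvec" assume s: "s \<in> S0"
  show "s \<in> closure lie_ball"
    unfolding closure_approachable
  proof (intro allI impI)
    fix e :: real assume e: "e > 0"
    define t where "t = max (1/2) (1 - e/2)"
    have t: "1/2 \<le> t" "t < 1" "1 - t < e" using e by (auto simp: t_def)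
    have "cscale (complex_of_real t) s \<in> lie_ball" using t s by (intro cscale_in_L) auto
    moreover have "dist (cscale (complex_of_real t) s) s = 1 - t"
    proof -
      have "cscale (complex_of_real t) s - s = cscale (complex_of_real t - 1) s"
        using cscale_diff[of "complex_of_real t" s 1] by (simp add: cco_eq_iff)
      moreover have "cmod (complex_of_real t - 1) = 1 - t"
        using t by (metis abs_of_neg diff_less_0_iff_less minus_diff_eq norm_of_real of_real_1 of_real_diff)
      ultimately show ?thesis using s t by (simp add: dist_norm norm_cscale S0_def)
    qed
    ultimately show "\<exists>y\<in>lie_ball. dist y s < e" using t by (intro bexI[of _ "cscale (complex_of_real t) s"]) auto
  qed
qed

lemma compact_S0: "compact (S0::'m::finite cvec set)"
proof -
  have "closed (S0::'m cvec set)"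
  proof -
    have c1: "continuous_on UNIV (\<lambda>z::'m cvec. cmod (sqsum z))" using continuous_on_norm[OF cont_sqsum] .
    have c2: "continuous_on UNIV (\<lambda>z::'m cvec. norm z)" by (intro continuous_intros)
    show ?thesis unfolding S0_def Collect_conj_eq
      by (intro closed_Int closed_Collect_eq c1 c2 continuous_on_const)
  qed
  moreover have "bounded (S0::'m cvec set)"
    by (rule bounded_subset[OF bounded_cball[of 0 1]]) (auto simp: S0_def)
  ultimately show ?thesis using compact_eq_bounded_closed by blast
qed

lemma one_in_S0: "((1::complex), 0::complex^'m::finite) \<in> S0"
  by (simp add: S0_def norm_Pair sqsum_def)

lemma cmod_comb_sq:
  fixes x y :: real and \<alpha> \<beta> :: complex
  shows "(cmod (\<alpha> * x + \<beta> * y))^2 = (cmod \<alpha>)^2 * x^2 + (cmod \<beta>)^2 * y^2 + 2 * (Re \<alpha> * Re \<beta> + Im \<alpha> * Im \<beta>) * (x * y)"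
  unfolding cmod_power2 by (simp add: power2_eq_square algebra_simps)

lemma slice:
  fixes X Y :: "'m::finite option \<Rightarrow> real" and \<alpha> \<beta> \<mu> :: complex
  assumes X: "(\<Sum>k\<in>UNIV. (X k)^2) = 1" and Y: "(\<Sum>k\<in>UNIV. (Y k)^2) = 1"
    and XY: "(\<Sum>k\<in>UNIV. X k * Y k) = 0" and mu: "cmod \<mu> = 1"
  shows "(norm (mkv (\<lambda>k. \<mu> * (\<alpha> * X k + \<beta> * Y k)) :: 'm cvec))^2 = (cmod \<alpha>)^2 + (cmod \<beta>)^2"
    and "sqsum (mkv (\<lambda>k. \<mu> * (\<alpha> * X k + \<beta> * Y k)) :: 'm cvec) = \<mu>^2 * (\<alpha>^2 + \<beta>^2)"
proof -
  have "(norm (mkv (\<lambda>k. \<mu> * (\<alpha> * X k + \<beta> * Y k)) :: 'm cvec))^2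
      = (\<Sum>k\<in>UNIV. (cmod (\<alpha> * X k + \<beta> * Y k))^2)"
    by (simp add: norm_sq norm_mult mu)
  also have "\<dots> = (cmod \<alpha>)^2 * (\<Sum>k\<in>UNIV. (X k)^2) + (cmod \<beta>)^2 * (\<Sum>k\<in>UNIV. (Y k)^2)
      + 2 * (Re \<alpha> * Re \<beta> + Im \<alpha> * Im \<beta>) * (\<Sum>k\<in>UNIV. X k * Y k)"
    by (simp add: cmod_comb_sq sum.distrib sum_distrib_left)
  finally show "(norm (mkv (\<lambda>k. \<mu> * (\<alpha> * X k + \<beta> * Y k)) :: 'm cvec))^2 = (cmod \<alpha>)^2 + (cmod \<beta>)^2"
    using X Y XY by simp
  have "sqsum (mkv (\<lambda>k. \<mu> * (\<alpha> * X k + \<beta> * Y k)) :: 'm cvec)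
     = \<mu>^2 * (\<alpha>^2 * of_real (\<Sum>k\<in>UNIV. (X k)^2) + \<beta>^2 * of_real (\<Sum>k\<in>UNIV. (Y k)^2)
         + 2 * \<alpha> * \<beta> * of_real (\<Sum>k\<in>UNIV. X k * Y k))"
    by (simp add: sqsum_cco power2_eq_square algebra_simps sum.distrib sum_distrib_left)
  then show "sqsum (mkv (\<lambda>k. \<mu> * (\<alpha> * X k + \<beta> * Y k)) :: 'm cvec) = \<mu>^2 * (\<alpha>^2 + \<beta>^2)"
    using X Y XY by simp
qed

lemma phase: "\<exists>l. cmod l = 1 \<and> l^2 * s = complex_of_real (cmod s)"
proof (cases "s = 0")
  case True then show ?thesis by (intro exI[of _ 1]) simp
next
  case False
  define l where "l = csqrt (cnj s / of_real (cmod s))"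
  have l2: "l^2 = cnj s / of_real (cmod s)" by (simp add: l_def)
  have "cmod (l^2) = 1" using False by (simp add: l2 norm_divide)
  then have "(cmod l)^2 = 1^2" by (simp add: norm_power)
  then have "cmod l = 1" using power2_eq_iff_nonneg[of "cmod l" 1] by simp
  moreover have "l^2 * s = complex_of_real (cmod s)"
  proof -
    have "l^2 * s = (s * cnj s) / of_real (cmod s)" by (simp add: l2 field_simps)
    also have "\<dots> = of_real ((cmod s)^2) / of_real (cmod s)" by (metis complex_norm_square)
    also have "\<dots> = of_real (cmod s)" using False by (simp add: power2_eq_square)
    finally show ?thesis .
  qed
  ultimately show ?thesis by blast
qed

lemma D2:
  assumes cf: "continuous_on (closure lie_ball) f" and hf: "holo_on f lie_ball"
    and M: "\<And>s. s \<in> S0 \<Longrightarrow> cmod (f s) \<le> M" and s: "s \<in> S0" and t: "cmod t < 1"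
  shows "cmod (f (cscale t s)) \<le> M"
proof -
  have hol: "(\<lambda>\<zeta>. f (0 + cscale \<zeta> s)) holomorphic_on ball 0 1"
    by (rule hol_line[OF hf open_ball]) (use cscale_in_L[OF s] in auto)
  have img: "(\<lambda>\<zeta>. cscale \<zeta> s) ` cball 0 1 \<subseteq> closure lie_ball"
  proof
    fix w assume "w \<in> (\<lambda>\<zeta>. cscale \<zeta> s) ` cball 0 1"
    then obtain \<zeta> where z: "cmod \<zeta> \<le> 1" "w = cscale \<zeta> s" by auto
    show "w \<in> closure lie_ball"
    proof (cases "cmod \<zeta> < 1")
      case True then show ?thesis using cscale_in_L[OF s True] z closure_subset by blast
    next
      case False then have "cmod \<zeta> = 1" using z by simp
      then show ?thesis using cscale_in_S0[OF s] S0_sub_closL z by blast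
    qed
  qed
  have cont: "continuous_on (cball 0 1) (\<lambda>\<zeta>. f (cscale \<zeta> s))"
    by (rule continuous_on_compose2[OF cf linear_continuous_on[OF bl_cscale] img])
  show ?thesis
  proof (rule maximum_modulus_frontier[of "\<lambda>\<zeta>. f (cscale \<zeta> s)" "cball 0 1" M t])
    show "(\<lambda>\<zeta>. f (cscale \<zeta> s)) holomorphic_on interior (cball 0 1)" using hol by simp
    show "continuous_on (closure (cball 0 1)) (\<lambda>\<zeta>. f (cscale \<zeta> s))" using cont by simp
    show "bounded (cball (0::complex) 1)" by simp
    show "cmod (f (cscale \<zeta> s)) \<le> M" if "\<zeta> \<in> frontier (cball 0 1)" for \<zeta>
      using that M cscale_in_S0[OF s] by simp
    show "t \<in> cball 0 1" using t by simp
  qed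
qed

lemma D0:
  assumes cf: "continuous_on (closure lie_ball) f" and hf: "holo_on f lie_ball"
    and M: "\<And>s. s \<in> S0 \<Longrightarrow> cmod (f s) \<le> M" and p: "p \<in> lie_ball" and ps: "cmod (sqsum p) = (norm p)^2"
  shows "cmod (f p) \<le> M"
proof (cases "p = 0")
  case True
  have "p = cscale 0 (1, 0)" using True by (simp add: cco_eq_iff)
  then show ?thesis using D2[OF cf hf M one_in_S0, of 0] by simp
next
  case False
  define n where "n = norm p"
  have n0: "n > 0" using False by (simp add: n_def)
  have n1: "n < 1" using p by (simp add: n_def lie_ball_def)
  define s where "s = cscale (of_real (1/n)) p"
  have "norm s = 1" using n0 by (simp add: s_def norm_cscale n_def norm_divide)
  moreover have "cmod (sqsum s) = 1"
    using n0 ps by (simp add: s_def sqsum_cscale norm_mult norm_power n_def power_divide norm_divide)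
  ultimately have sS: "s \<in> S0" by (simp add: S0_def)
  have "p = cscale (of_real n) s" using n0 by (simp add: s_def cco_eq_iff)
  then show ?thesis using D2[OF cf hf M sS, of "of_real n"] n0 n1 by simp
qed

lemma parallelo: "(cmod (\<zeta> + of_real q))^2 + (cmod (\<zeta> - of_real q))^2 = 2 * (cmod \<zeta>)^2 + 2 * q^2"
  unfolding cmod_power2 by (simp add: power2_eq_square algebra_simps)

lemma D1:
  assumes cf: "continuous_on (closure lie_ball) f" and hf: "holo_on f lie_ball"
    and M: "\<And>s. s \<in> S0 \<Longrightarrow> cmod (f s) \<le> M" and z: "z \<in> lie_ball"
  shows "cmod (f z) \<le> M"
proof -
  obtain l where l1: "cmod l = 1" and l2: "l^2 * sqsum z = of_real (cmod (sqsum z))"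
    using phase by blast
  define z' where "z' = cscale l z"
  define x where "x k = Re (cco z' k)" for k
  define y where "y k = Im (cco z' k)" for k
  define A where "A = (\<Sum>k\<in>UNIV. (x k)^2)"
  define B where "B = (\<Sum>k\<in>UNIV. (y k)^2)"
  have sq': "sqsum z' = of_real (cmod (sqsum z))" by (simp add: z'_def sqsum_cscale l2)
  have "Re (sqsum z') = A - B"
    by (simp add: sqsum_cco Re_power2 A_def B_def x_def y_def sum_subtractf)
  then have AB: "A - B = cmod (sqsum z)" using sq' by simp
  have "Im (sqsum z') = 2 * (\<Sum>k\<in>UNIV. x k * y k)"
    by (simp add: sqsum_cco Im_power2 x_def y_def sum_distrib_left mult.assoc)
  then have XY0: "(\<Sum>k\<in>UNIV. x k * y k) = 0" using sq' by simp
  have "norm z' = norm z" by (simp add: z'_def norm_cscale l1)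
  then have "(norm z)^2 = (\<Sum>k\<in>UNIV. (x k)^2 + (y k)^2)"
    using norm_sq[of z'] by (simp add: cmod_power2 x_def y_def)
  then have nz: "(norm z)^2 = A + B" by (simp add: A_def B_def sum.distrib)
  have A0: "A \<ge> 0" and B0: "B \<ge> 0" by (auto simp: A_def B_def intro: sum_nonneg)
  have cl: "cnj l * l = 1"
  proof -
    have "of_real ((cmod l)^2) = l * cnj l" by (rule complex_norm_square)
    then show ?thesis using l1 by (simp add: mult.commute)
  qed
  have z'k: "cco z' k = of_real (x k) + \<i> * of_real (y k)" for k
    by (simp add: x_def y_def complex_eq[symmetric])
  show ?thesis
  proof (cases "B = 0")
    case True
    then show ?thesis using D0[OF cf hf M z] AB nz by simp
  next
    case False
    then have Bp: "B > 0" using B0 by simp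
    have ApB: "A \<ge> B" using AB norm_ge_zero[of "sqsum z"] by linarith
    then have Ap: "A > 0" using Bp by simp
    define a where "a = sqrt A"
    define b where "b = sqrt B"
    define q where "q = a + b"
    have a0: "a > 0" and b0: "b > 0" using Ap Bp by (auto simp: a_def b_def)
    have aA: "a^2 = A" and bB: "b^2 = B" using Ap Bp by (auto simp: a_def b_def)
    have zl: "sqrt ((norm z)^4 - (cmod (sqsum z))^2) < 1 - (norm z)^2"
      using z by (simp add: lie_ball_def)
    have "(norm z)^4 - (cmod (sqsum z))^2 = (2*a*b)^2"
    proof -
      have "(norm z)^4 = ((norm z)^2)^2" by (simp flip: power_mult)
      then have "(norm z)^4 - (cmod (sqsum z))^2 = (A+B)^2 - (A-B)^2" using nz AB by simp
      also have "\<dots> = 4*A*B" by (simp add: power2_eq_square algebra_simps)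
      also have "\<dots> = (2*a*b)^2" using aA bB by (simp add: power_mult_distrib)
      finally show ?thesis .
    qed
    then have "2*a*b < 1 - (a^2 + b^2)" using zl nz aA bB a0 b0 by simp
    then have "q^2 < 1" by (simp add: q_def power2_eq_square algebra_simps)
    then have q1: "q < 1" and q0: "q > 0" using a0 b0 by (auto simp: q_def abs_square_less_1)
    define X where "X k = x k / a" for k
    define Y where "Y k = y k / b" for k
    have X1: "(\<Sum>k\<in>UNIV. (X k)^2) = 1"
      using a0 aA Ap by (simp add: X_def power_divide A_def flip: sum_divide_distrib)
    have Y1: "(\<Sum>k\<in>UNIV. (Y k)^2) = 1"
      using b0 bB Bp by (simp add: Y_def power_divide B_def flip: sum_divide_distrib)
    have XY: "(\<Sum>k\<in>UNIV. X k * Y k) = 0"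
      using XY0 by (simp add: X_def Y_def flip: sum_divide_distrib)
    have cl1: "cmod (cnj l) = 1" using l1 by simp
    define \<gamma> where "\<gamma> \<zeta> = (mkv (\<lambda>k. cnj l * (((\<zeta> + complex_of_real q)/2) * complex_of_real (X k) + ((\<zeta> - complex_of_real q)/(2*\<i>)) * complex_of_real (Y k))) :: 'a cvec)" for \<zeta> :: complex
    define V where "V = (mkv (\<lambda>k. cnj l * (complex_of_real (X k) / 2 + complex_of_real (Y k) / (2*\<i>))) :: 'a cvec)"
    have gaff: "\<gamma> \<zeta> = \<gamma> 0 + cscale \<zeta> V" for \<zeta> :: complex
      unfolding cco_eq_iff \<gamma>_def V_def
      by (simp add: diff_divide_distrib add_divide_distrib algebra_simps)
    have gn: "(norm (\<gamma> \<zeta>))^2 = ((cmod \<zeta>)^2 + q^2)/2" for \<zeta> :: complex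
    proof -
      have "(norm (\<gamma> \<zeta>))^2 = (cmod ((\<zeta> + of_real q)/2))^2 + (cmod ((\<zeta> - of_real q)/(2*\<i>)))^2"
        unfolding \<gamma>_def by (rule slice(1)[OF X1 Y1 XY cl1])
      also have "\<dots> = ((cmod (\<zeta> + of_real q))^2 + (cmod (\<zeta> - of_real q))^2) / 4"
        by (simp add: norm_divide norm_mult power_divide)
      finally show ?thesis using parallelo[of \<zeta> q] by simp
    qed
    have gs: "cmod (sqsum (\<gamma> \<zeta>)) = cmod \<zeta> * q" for \<zeta> :: complex
    proof -
      have "sqsum (\<gamma> \<zeta>) = (cnj l)^2 * (((\<zeta> + of_real q)/2)^2 + ((\<zeta> - of_real q)/(2*\<i>))^2)"
        unfolding \<gamma>_def by (rule slice(2)[OF X1 Y1 XY cl1])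
      also have "\<dots> = (cnj l)^2 * (\<zeta> * of_real q)"
        by (simp add: power2_eq_square field_simps)
      finally show ?thesis using cl1 q0 by (simp add: norm_mult norm_power)
    qed
    have ginL: "\<gamma> \<zeta> \<in> lie_ball" if "cmod \<zeta> < 1" for \<zeta> :: complex
    proof -
      define u where "u = (cmod \<zeta>)^2"
      define v where "v = q^2"
      have u1: "u < 1" and u0: "u \<ge> 0" using that by (auto simp: u_def abs_square_less_1)
      have v1: "v < 1" and v0: "v \<ge> 0" using \<open>q^2 < 1\<close> by (auto simp: v_def)
      have n2: "(norm (\<gamma> \<zeta>))^2 = (u + v)/2" using gn by (simp add: u_def v_def)
      have "(norm (\<gamma> \<zeta>))^2 < 1" using n2 u1 v1 by simp
      then have nlt: "norm (\<gamma> \<zeta>) < 1" by (simp add: abs_square_less_1)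
      have "(norm (\<gamma> \<zeta>))^4 - (cmod (sqsum (\<gamma> \<zeta>)))^2 = ((u - v)/2)^2"
      proof -
        have "(norm (\<gamma> \<zeta>))^4 = ((norm (\<gamma> \<zeta>))^2)^2" by (simp flip: power_mult)
        then have "(norm (\<gamma> \<zeta>))^4 = ((u+v)/2)^2" by (simp only: n2)
        moreover have "(cmod (sqsum (\<gamma> \<zeta>)))^2 = u * v"
          by (simp add: gs u_def v_def power_mult_distrib)
        moreover have "((u+v)/2)^2 - u * v = ((u - v)/2)^2" by (simp add: power2_eq_square field_simps)
        ultimately show ?thesis by simp
      qed
      then have "sqrt ((norm (\<gamma> \<zeta>))^4 - (cmod (sqsum (\<gamma> \<zeta>)))^2) = \<bar>u - v\<bar>/2" by simp
      also have "\<dots> < 1 - (norm (\<gamma> \<zeta>))^2" using n2 u1 v1 by (simp add: abs_if)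
      finally show ?thesis using nlt by (simp add: lie_ball_def)
    qed
    have hol: "(\<lambda>\<zeta>. f (\<gamma> 0 + cscale \<zeta> V)) holomorphic_on ball 0 1"
    proof (rule hol_line[OF hf open_ball])
      fix \<zeta> :: complex assume "\<zeta> \<in> ball 0 1"
      then show "\<gamma> 0 + cscale \<zeta> V \<in> lie_ball"
        unfolding gaff[of \<zeta>, symmetric] using ginL by simp
    qed
    moreover have "(\<lambda>\<zeta>. f (\<gamma> 0 + cscale \<zeta> V)) = (\<lambda>\<zeta>. f (\<gamma> \<zeta>))"
    proof (rule ext)
      fix \<zeta> show "f (\<gamma> 0 + cscale \<zeta> V) = f (\<gamma> \<zeta>)" unfolding gaff[of \<zeta>, symmetric] ..
    qed
    ultimately have hol': "(\<lambda>\<zeta>. f (\<gamma> \<zeta>)) holomorphic_on ball 0 1" by simp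
    have sub: "cball 0 q \<subseteq> ball (0::complex) 1" using q1 by auto
    have gz: "\<gamma> (of_real (a - b)) = z"
    proof -
      have e1: "(complex_of_real (a - b) + of_real q)/2 = of_real a" by (simp add: q_def field_simps)
      have e2: "(complex_of_real (a - b) - of_real q)/(2*\<i>) = \<i> * of_real b" by (simp add: q_def field_simps)
      have e3: "complex_of_real a * of_real (X k) = of_real (x k)" for k using a0 by (simp add: X_def)
      have e4: "complex_of_real b * of_real (Y k) = of_real (y k)" for k using b0 by (simp add: Y_def)
      have "cco (\<gamma> (of_real (a - b))) k = cnj l * cco z' k" for k
        unfolding \<gamma>_def cco_mk e1 e2 z'k using e3[of k] e4[of k] by (simp add: mult.assoc)
      then show ?thesis using cl by (simp add: cco_eq_iff z'_def)
    qed
    have "cmod (f (\<gamma> (of_real (a - b)))) \<le> M"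
    proof (rule maximum_modulus_frontier[of "\<lambda>\<zeta>. f (\<gamma> \<zeta>)" "cball 0 q" M])
      show "(\<lambda>\<zeta>. f (\<gamma> \<zeta>)) holomorphic_on interior (cball 0 q)"
        using q1 by (simp, intro holomorphic_on_subset[OF hol']) auto
      show "continuous_on (closure (cball 0 q)) (\<lambda>\<zeta>. f (\<gamma> \<zeta>))"
        using holomorphic_on_imp_continuous_on[OF holomorphic_on_subset[OF hol' sub]] by simp
      show "bounded (cball (0::complex) q)" by simp
      show "cmod (f (\<gamma> \<zeta>)) \<le> M" if "\<zeta> \<in> frontier (cball 0 q)" for \<zeta>
      proof -
        have cz: "cmod \<zeta> = q" using that q0 by simp
        show ?thesis
        proof (rule D0[OF cf hf M])
          show "\<gamma> \<zeta> \<in> lie_ball" using ginL cz q1 by simp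
          show "cmod (sqsum (\<gamma> \<zeta>)) = (norm (\<gamma> \<zeta>))^2" using gs[of \<zeta>] gn[of \<zeta>] cz by (simp add: power2_eq_square)
        qed
      qed
      show "complex_of_real (a - b) \<in> cball 0 q"
        unfolding mem_cball_0 norm_of_real q_def using a0 b0 by (simp add: abs_if)
    qed
    then show ?thesis using gz by simp
  qed
qed

lemma S0_boundary_L: "is_closed_boundary (lie_ball :: 'm::finite cvec set) S0"
  unfolding is_closed_boundary_def
proof (intro conjI ballI)
  show "closed S0" using compact_S0 compact_imp_closed by blast
  show "S0 \<subseteq> closure lie_ball" by (rule S0_sub_closL)
  fix f :: "'m cvec \<Rightarrow> complex" and z :: "'m cvec" assume f: "f \<in> alg_A lie_ball" and z: "z \<in> closure lie_ball"
  have cf: "continuous_on (closure lie_ball) f" and hf: "holo_on f lie_ball"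
    using f by (auto simp: alg_A_def)
  have "continuous_on S0 (\<lambda>s. cmod (f s))"
    by (intro continuous_on_norm continuous_on_subset[OF cf S0_sub_closL])
  then obtain s0 where s0: "s0 \<in> S0" and smax: "\<And>s. s \<in> S0 \<Longrightarrow> cmod (f s) \<le> cmod (f s0)"
    using continuous_attains_sup[OF compact_S0 _ ] one_in_S0 by blast
  have "f ` lie_ball \<subseteq> cball 0 (cmod (f s0))"
    using D1[OF cf hf smax] by auto
  then have "f ` closure lie_ball \<subseteq> cball 0 (cmod (f s0))"
    by (rule image_closure_subset[OF cf closed_cball])
  then have "f z \<in> cball 0 (cmod (f s0))" using z by blast
  then show "\<exists>s\<in>S0. cmod (f z) \<le> cmod (f s)" using s0 by auto
qed

lemma cmod_diff_sq: "(cmod (u - v))^2 = (cmod u)^2 + (cmod v)^2 - 2 * Re (u * cnj v)"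
  unfolding cmod_power2 by (simp add: power2_eq_square algebra_simps)

lemma Re_hip: "Re (\<Sum>k\<in>UNIV. cco z k * cnj (cco p k)) = ((norm z)^2 + (norm p)^2 - (norm (z - p))^2) / 2"
proof -
  have e: "Re (cco z k * cnj (cco p k)) = ((cmod (cco z k))^2 + (cmod (cco p k))^2 - (cmod (cco z k - cco p k))^2) / 2" for k
    using cmod_diff_sq[of "cco z k" "cco p k"] by simp
  have "Re (\<Sum>k\<in>UNIV. cco z k * cnj (cco p k)) = (\<Sum>k\<in>UNIV. ((cmod (cco z k))^2 + (cmod (cco p k))^2 - (cmod (cco z k - cco p k))^2) / 2)"
    by (simp only: Re_sum e)
  also have "\<dots> = ((\<Sum>k\<in>UNIV. (cmod (cco z k))^2) + (\<Sum>k\<in>UNIV. (cmod (cco p k))^2) - (\<Sum>k\<in>UNIV. (cmod (cco (z - p) k))^2)) / 2"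
    by (simp only: cco_diff sum_subtractf sum.distrib flip: sum_divide_distrib)
  finally show ?thesis by (simp only: norm_sq)
qed

lemma S0_in_boundary_L:
  assumes S: "is_closed_boundary lie_ball S" shows "S0 \<subseteq> S"
proof
  fix p :: "'a cvec" assume p: "p \<in> S0"
  define g where "g = (\<lambda>z. exp (linf (\<lambda>k. cnj (cco p k)) z))"
  have gA: "g \<in> alg_A lie_ball"
    unfolding alg_A_def g_def using cont_exp_lin hol_exp_lin by blast
  have cg: "cmod (g z) = exp (((norm z)^2 + (norm p)^2 - (norm (z - p))^2) / 2)" for z
  proof -
    have "linf (\<lambda>k. cnj (cco p k)) z = (\<Sum>k\<in>UNIV. cco z k * cnj (cco p k))"
      by (simp add: linf_def mult.commute)
    then have "cmod (g z) = exp (Re (\<Sum>k\<in>UNIV. cco z k * cnj (cco p k)))"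
      by (simp only: g_def norm_exp_eq_Re)
    then show ?thesis by (simp only: Re_hip)
  qed
  obtain s where s: "s \<in> S" and le: "cmod (g p) \<le> cmod (g s)"
    using S p S0_sub_closL unfolding is_closed_boundary_def using gA by blast
  have "s \<in> closure lie_ball" using S s unfolding is_closed_boundary_def by blast
  then have sn: "norm s \<le> 1" by (rule closL_norm)
  have pn: "norm p = 1" using p by (simp add: S0_def)
  from le have "((norm p)^2 + (norm p)^2 - (norm (p - p))^2) / 2 \<le> ((norm s)^2 + (norm p)^2 - (norm (s - p))^2) / 2"
    by (simp only: cg exp_le_cancel_iff)
  moreover have "(norm s)^2 \<le> 1" using sn norm_ge_zero[of s] by (simp add: abs_le_square_iff power_le_one)
  ultimately have h: "1 \<le> (norm s)^2 - (norm (s - p))^2 \<and> (norm s)^2 \<le> 1" using pn by simp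
  have "(norm (s - p))^2 \<le> 0" using h by linarith
  then have "s = p" by simp
  then show "p \<in> S" using s by simp
qed

lemma shilov_L: "shilov_boundary (lie_ball :: 'm::finite cvec set) = S0"
proof
  show "shilov_boundary (lie_ball :: 'm cvec set) \<subseteq> S0"
    unfolding shilov_boundary_def using S0_boundary_L by blast
  show "S0 \<subseteq> shilov_boundary (lie_ball :: 'm cvec set)"
    unfolding shilov_boundary_def using S0_in_boundary_L by blast
qed

lemma contLam: "continuous_on S Lam"
  unfolding Lam_def by (intro continuous_intros)

lemma closLL: "closure (LL :: 'm::finite cvec set) = Lam ` closure lie_ball"
proof
  have "compact (Lam ` closure (lie_ball :: 'm cvec set))"
    by (intro compact_continuous_image contLam compact_closL)
  then have "closed (Lam ` closure (lie_ball :: 'm cvec set))" by (rule compact_imp_closed)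
  moreover have "(LL :: 'm cvec set) \<subseteq> Lam ` closure lie_ball"
    unfolding LL_def using closure_subset by blast
  ultimately show "closure (LL :: 'm cvec set) \<subseteq> Lam ` closure lie_ball"
    by (rule closure_minimal[rotated])
  show "Lam ` closure lie_ball \<subseteq> closure (LL :: 'm cvec set)"
    by (rule image_closure_subset[OF contLam closed_closure]) (auto simp: LL_def intro: closure_subset[THEN subsetD])
qed

lemma LamS0_boundary: "is_closed_boundary (LL :: 'm::finite cvec set) (Lam ` S0)"
  unfolding is_closed_boundary_def
proof (intro conjI ballI)
  show "closed (Lam ` (S0 :: 'm cvec set))"
    by (intro compact_imp_closed compact_continuous_image contLam compact_S0)
  show "Lam ` S0 \<subseteq> closure (LL :: 'm cvec set)"
    unfolding closLL using S0_sub_closL by blast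
  fix f :: "'m cvec \<Rightarrow> complex" and v :: "'m cvec"
  assume f: "f \<in> alg_A LL" and v: "v \<in> closure LL"
  have cf: "continuous_on (closure LL) f" and hf: "holo_on f LL"
    using f by (auto simp: alg_A_def)
  have fA: "(\<lambda>z. f (Lam z)) \<in> alg_A lie_ball"
    unfolding alg_A_def
  proof (intro CollectI conjI)
    show "continuous_on (closure lie_ball) (\<lambda>z. f (Lam z))"
      by (rule continuous_on_compose2[OF cf contLam]) (simp add: closLL)
    show "holo_on (\<lambda>z. f (Lam z)) lie_ball"
      by (rule hol_Lam[OF hf]) (simp add: LL_def)
  qed
  moreover obtain z where z: "z \<in> closure lie_ball" "v = Lam z" using v closLL by blast
  moreover have "\<forall>g\<in>alg_A lie_ball. \<forall>z\<in>closure lie_ball. \<exists>s\<in>S0. cmod (g z) \<le> cmod (g s)"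
    using S0_boundary_L unfolding is_closed_boundary_def by blast
  ultimately obtain s where "s \<in> S0" "cmod (f (Lam z)) \<le> cmod (f (Lam s))"
    using fA z(1) by (metis (no_types, lifting))
  then show "\<exists>s\<in>Lam ` S0. cmod (f v) \<le> cmod (f s)" using z by blast
qed

lemma norm_sq2: "(norm z)^2 = (cmod (fst z))^2 + (\<Sum>j\<in>UNIV. (cmod (snd z $ j))^2)"
  by (simp add: norm_sq sum_opt cco_def)

lemma S0_phase:
  assumes p: "p \<in> S0" shows "(fst p)^2 = sqsum p * of_real ((cmod (fst p))^2)"
proof -
  define c where "c = sqsum p"
  have c1: "cmod c = 1" and p1: "norm p = 1" using p by (auto simp: S0_def c_def)
  have e: "(cmod (cco p k - c * cnj (cco p k)))^2 = 2 * (cmod (cco p k))^2 - 2 * Re (cnj c * (cco p k)^2)" for k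
  proof -
    have h2: "cco p k * cnj (c * cnj (cco p k)) = cnj c * (cco p k)^2" by (simp add: power2_eq_square)
    have h1: "cmod (c * cnj (cco p k)) = cmod (cco p k)" using c1 by (simp add: norm_mult)
    show ?thesis using cmod_diff_sq[of "cco p k" "c * cnj (cco p k)"] unfolding h1 h2 by linarith
  qed
  have "(\<Sum>k\<in>UNIV. (cmod (cco p k - c * cnj (cco p k)))^2)
      = 2 * (\<Sum>k\<in>UNIV. (cmod (cco p k))^2) - 2 * Re (cnj c * (\<Sum>k\<in>UNIV. (cco p k)^2))"
    unfolding e by (simp add: sum_subtractf sum_distrib_left)
  also have "\<dots> = 2 - 2 * Re (cnj c * c)" using p1 by (simp add: norm_sq[symmetric] sqsum_cco[symmetric] c_def)
  also have "Re (cnj c * c) = 1" using c1 by (simp add: cmod_power2[symmetric] power2_eq_square[symmetric]) 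
  finally have "(\<Sum>k\<in>UNIV. (cmod (cco p k - c * cnj (cco p k)))^2) = 0" by simp
  then have "(cmod (cco p None - c * cnj (cco p None)))^2 = 0"
    by (subst (asm) sum_nonneg_eq_0_iff) auto
  then have "fst p = c * cnj (fst p)" by (simp add: cco_def)
  then have "(fst p)^2 = c * (fst p * cnj (fst p))" by (metis power2_eq_square mult.left_commute)
  moreover have "fst p * cnj (fst p) = of_real ((cmod (fst p))^2)" by (rule complex_norm_square[symmetric])
  ultimately show ?thesis by (simp only: c_def)
qed

lemma LamS0_in:
  assumes S: "is_closed_boundary (LL :: 'm::finite cvec set) S" shows "Lam ` S0 \<subseteq> S"
proof
  fix q assume "q \<in> Lam ` (S0 :: 'm cvec set)"
  then obtain p :: "'m cvec" where p: "p \<in> S0" and q: "q = Lam p" by blast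
  define c where "c = sqsum p"
  define b where "b = snd p"
  define a where "a = (\<lambda>k. case k of None \<Rightarrow> cnj c | Some j \<Rightarrow> 2 * cnj (b $ j))"
  define Kb where "Kb = (\<Sum>j\<in>UNIV. (cmod (b $ j))^2)"
  define g where "g = (\<lambda>v. exp (linf a v))"
  have c1: "cmod c = 1" and pn: "norm p = 1" using p by (auto simp: S0_def c_def)
  have cc: "c * cnj c = 1"
  proof -
    have "of_real ((cmod c)^2) = c * cnj c" by (rule complex_norm_square)
    then show ?thesis using c1 by simp
  qed
  have p1: "(fst p)^2 = c * of_real ((cmod (fst p))^2)" using S0_phase[OF p] by (simp add: c_def)
  have pK: "(cmod (fst p))^2 + Kb = 1" using norm_sq2[of p] pn by (simp add: Kb_def b_def)
  have gA: "g \<in> alg_A LL"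
    unfolding alg_A_def g_def using cont_exp_lin hol_exp_lin by blast
  have ReL: "Re (linf a (Lam z)) = Re (cnj c * (fst z)^2) +
      ((\<Sum>j\<in>UNIV. (cmod (snd z $ j))^2) + Kb - (\<Sum>j\<in>UNIV. (cmod (snd z $ j - b $ j))^2))" for z :: "'m cvec"
  proof -
    have "linf a (Lam z) = cnj c * (fst z)^2 + (\<Sum>j\<in>UNIV. 2 * (snd z $ j * cnj (b $ j)))"
      by (simp add: linf_def sum_opt cco_def Lam_def a_def algebra_simps)
    then have "Re (linf a (Lam z)) = Re (cnj c * (fst z)^2) + (\<Sum>j\<in>UNIV. 2 * Re (snd z $ j * cnj (b $ j)))"
      by simp
    also have "(\<Sum>j\<in>UNIV. 2 * Re (snd z $ j * cnj (b $ j))) = (\<Sum>j\<in>UNIV. (cmod (snd z $ j))^2 + (cmod (b $ j))^2 - (cmod (snd z $ j - b $ j))^2)"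
      by (rule sum.cong) (auto simp: cmod_diff_sq)
    also have "\<dots> = (\<Sum>j\<in>UNIV. (cmod (snd z $ j))^2) + Kb - (\<Sum>j\<in>UNIV. (cmod (snd z $ j - b $ j))^2)"
      by (simp add: Kb_def sum_subtractf sum.distrib)
    finally show ?thesis .
  qed
  have gq: "Re (linf a q) = 1 + Kb"
  proof -
    have "Re (cnj c * (fst p)^2) = (cmod (fst p))^2"
    proof -
      have "cnj c * (fst p)^2 = (c * cnj c) * of_real ((cmod (fst p))^2)" by (simp add: p1)
      then show ?thesis by (simp add: cc)
    qed
    then show ?thesis using ReL[of p] pK by (simp add: q b_def Kb_def)
  qed
  obtain s where s: "s \<in> S" and le: "cmod (g q) \<le> cmod (g s)"
  proof -
    have "q \<in> closure LL" using q p S0_sub_closL closLL by blast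
    then show ?thesis using S gA that unfolding is_closed_boundary_def by blast
  qed
  have "s \<in> closure LL" using S s unfolding is_closed_boundary_def by blast
  then obtain z where z: "z \<in> closure lie_ball" "s = Lam z" using closLL by blast
  have zn: "(norm z)^2 \<le> 1" using closL_norm[OF z(1)] norm_ge_zero[of z] by (simp add: power_le_one)
  have nz2: "(norm z)^2 = (cmod (fst z))^2 + (\<Sum>j\<in>UNIV. (cmod (snd z $ j))^2)" by (rule norm_sq2)
  define D where "D = (\<Sum>j\<in>UNIV. (cmod (snd z $ j - b $ j))^2)"
  have D0: "D \<ge> 0" unfolding D_def by (intro sum_nonneg) auto
  define r where "r = cnj c * (fst z)^2"
  have rc: "cmod r = (cmod (fst z))^2" by (simp add: r_def norm_mult c1 norm_power)
  have rle: "Re r \<le> cmod r" by (rule complex_Re_le_cmod)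
  from le have "1 + Kb \<le> Re (linf a s)" by (simp add: g_def norm_exp_eq_Re gq)
  then have main: "1 + Kb \<le> Re r + (\<Sum>j\<in>UNIV. (cmod (snd z $ j))^2) + Kb - D"
    using ReL[of z] z(2) by (simp add: r_def D_def)
  have "D \<le> 0" using main rle rc nz2 zn by linarith
  then have "D = 0" using D0 by simp
  then have "\<forall>j\<in>UNIV. (cmod (snd z $ j - b $ j))^2 = 0"
    unfolding D_def by (subst (asm) sum_nonneg_eq_0_iff) auto
  then have wb: "snd z = b" by (simp add: vec_eq_iff)
  have Rr: "Re r = cmod r" using main rle rc nz2 zn D0 by linarith
  have nz1: "(norm z)^2 = 1" using main rle rc nz2 zn D0 by linarith
  have "Im r = 0"
  proof -
    have "(cmod r)^2 = (Re r)^2 + (Im r)^2" by (rule cmod_power2)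
    then show ?thesis using Rr by simp
  qed
  then have "r = of_real (cmod r)" using Rr by (simp add: complex_eq_iff)
  then have "c * r = c * of_real ((cmod (fst z))^2)" by (simp add: rc)
  moreover have "c * r = (fst z)^2" by (simp add: r_def cc mult.assoc[symmetric])
  moreover have "(cmod (fst z))^2 = (cmod (fst p))^2"
  proof -
    have h: "(cmod (fst z))^2 + Kb = 1" using nz1 nz2 wb by (simp add: Kb_def)
    show ?thesis using h pK by linarith
  qed
  ultimately have "(fst z)^2 = (fst p)^2" using p1 by simp
  then have "s = q" using z(2) q wb by (simp add: Lam_def b_def)
  then show "q \<in> S" using s by simp
qed

lemma shilov_LL: "shilov_boundary (LL :: 'm::finite cvec set) = Lam ` S0"
proof
  show "shilov_boundary (LL :: 'm cvec set) \<subseteq> Lam ` S0"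
    unfolding shilov_boundary_def using LamS0_boundary by blast
  show "Lam ` S0 \<subseteq> shilov_boundary (LL :: 'm cvec set)"
    unfolding shilov_boundary_def using LamS0_in by blast
qed

theorem proposition4p1:
  shows "shilov_boundary (LL :: 'm::finite cvec set) = Lam ` shilov_boundary (lie_ball :: 'm cvec set)"
  by (simp add: shilov_LL shilov_L)

end
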